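(* Let $\beta_0,n,\delta,r,k>0$. Let $\mathcal{B}_+$ be the set of continuous functions $\phi:[-r,0]\to[0,\infty)$. Define $G(u)=\int_0^u\frac{2s}{1+s^n}\,ds$ for $u\ge0$, and $$V(\phi)=G(\phi(0))+k\beta_0\int_{-r}^{0}\frac{\phi(s)^2}{(1+\phi(s)^n)^2}\,ds,\qquad \phi\in\mathcal{B}_+.$$ For $\phi\in\mathcal{B}_+$ let $x(\cdot,\phi)$ denote the solution of $$\dot{x}(t)=-\Big[\frac{\beta_0}{1+x(t)^n}+\delta\Big]x(t)+k\,\frac{\beta_0\,x(t-r)}{1+x(t-r)^n}$$ with $x(s,\phi)=\phi(s)$ on $[-r,0]$, let $x_h(\phi)\in\mathcal{B}_+$ be $x_h(\phi)(s)=x(h+s,\phi)$, and set $\dot V(\phi)=\limsup_{h\to0^+}\frac1h[V(x_h(\phi))-V(\phi)]$. Then for every $\phi\in\mathcal{B}_+$, $$\dot V(\phi)\le 2(k\beta_0-\beta_0-\delta)\,\frac{\phi(0)^2}{(1+\phi(0)^n)^2}.$$ In particular, if $k\beta_0=\beta_0+\delta$, then $\dot V(\phi)\le 0$ for all $\phi\in\mathcal{B}_+$.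
   Context: The solution $x(\cdot,\phi)$ exists on $[-r,\infty)$, is unique and nonnegative for nonnegative continuous initial data. *)

theory Defs
  imports "HOL-Analysis.Analysis"
begin

definition G :: "real \<Rightarrow> real \<Rightarrow> real" where
  "G n u = integral {0..u} (\<lambda>s. 2 * s / (1 + s powr n))"

definition V :: "real \<Rightarrow> real \<Rightarrow> real \<Rightarrow> real \<Rightarrow> (real \<Rightarrow> real) \<Rightarrow> real" where
  "V beta0 n r k phi = G n (phi 0) +
     k * beta0 * integral {-r..0} (\<lambda>s. (phi s)\<^sup>2 / (1 + (phi s) powr n)\<^sup>2)"

definition Bplus :: "real \<Rightarrow> (real \<Rightarrow> real) set" where
  "Bplus r = {phi. continuous_on {-r..0} phi \<and> (\<forall>s\<in>{-r..0}. phi s \<ge> 0)}"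

definition is_solution ::
  "real \<Rightarrow> real \<Rightarrow> real \<Rightarrow> real \<Rightarrow> real \<Rightarrow> (real \<Rightarrow> real) \<Rightarrow> (real \<Rightarrow> real) \<Rightarrow> bool" where
  "is_solution beta0 n delta r k phi x \<longleftrightarrow>
     (\<forall>s\<in>{-r..0}. x s = phi s) \<and>
     continuous_on {-r..} x \<and>
     (\<forall>t\<ge>-r. x t \<ge> 0) \<and>
     (\<forall>t\<ge>0. (x has_real_derivative
         (- (beta0 / (1 + x t powr n) + delta) * x t
          + k * (beta0 * x (t - r) / (1 + x (t - r) powr n)))) (at t within {0..}))"

definition seg :: "(real \<Rightarrow> real) \<Rightarrow> real \<Rightarrow> real \<Rightarrow> real" where
  "seg x h = (\<lambda>s. x (h + s))"

end

theory Submission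
  imports Defs
begin

lemma deriv_int_ray:
  fixes g :: "real \<Rightarrow> real"
  assumes "continuous_on {a..} g" "u \<ge> a"
  shows "((\<lambda>t. integral {a..t} g) has_real_derivative g u) (at u within {a..})"
proof -
  have c: "continuous_on {a..u+1} g" using assms(1) by (rule continuous_on_subset) auto
  have "((\<lambda>t. integral {a..t} g) has_vector_derivative g u) (at u within {a..u+1})"
    using integral_has_vector_derivative[OF c] assms(2) by auto
  hence d: "((\<lambda>t. integral {a..t} g) has_real_derivative g u) (at u within {a..u+1})"
    by (simp add: has_real_derivative_iff_has_vector_derivative)
  have "at u within {a..u+1} = at u within {a..}"
    by (rule at_within_nhd[of _ "{..<u+1}"]) auto
  with d show ?thesis by simp
qed

lemma powr_cont: "(n::real) > 0 \<Longrightarrow> continuous_on {0..} (\<lambda>u::real. u powr n)"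
  by (rule continuous_on_powr') (auto intro: continuous_intros)

lemma ineq_main:
  fixes b0 d k x0 xr p0 pr :: real
  assumes "b0 > 0" "d > 0" "k > 0" "p0 \<ge> 0" "pr \<ge> 0" "x0 \<ge> 0" "xr \<ge> 0"
  shows "2 * x0 / (1 + p0) * (- (b0 / (1 + p0) + d) * x0 + k * (b0 * xr / (1 + pr)))
         + k * b0 * (x0\<^sup>2 / (1 + p0)\<^sup>2 - xr\<^sup>2 / (1 + pr)\<^sup>2)
       \<le> 2 * (k * b0 - b0 - d) * x0\<^sup>2 / (1 + p0)\<^sup>2"
proof -
  define a where "a = x0 / (1 + p0)"
  define b where "b = xr / (1 + pr)"
  have h1: "2 * a * b \<le> a\<^sup>2 + b\<^sup>2" by (smt (verit) sum_squares_bound)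
  have h2: "x0\<^sup>2 / (1 + p0)\<^sup>2 \<le> x0\<^sup>2 / (1 + p0)"
    using assms by (intro divide_left_mono) (auto simp: power2_eq_square)
  have q1: "2 * x0 / (1 + p0) = 2 * a" "b0 * xr / (1 + pr) = b0 * b" unfolding a_def b_def by simp_all
  define c where "c = b0 / (1 + p0)"
  have q2: "c * (a * x0) = b0 * a\<^sup>2" "a * x0 = x0\<^sup>2/(1+p0)"
    unfolding a_def c_def by (simp_all add: power2_eq_square)
  define X where "X = x0\<^sup>2/(1+p0)"
  have q3: "a * x0 = X" using q2(2) X_def by simp
  have "2 * x0 / (1 + p0) * (- (b0 / (1 + p0) + d) * x0 + k * (b0 * xr / (1 + pr)))
     = 2*a*(-(c+d)*x0 + k*(b0*b))" unfolding q1 c_def by simp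
  also have "\<dots> = -2*(c*(a*x0)) - 2*d*(a*x0) + 2*k*b0*a*b" by (simp add: algebra_simps)
  also have "\<dots> = -2*(b0 * a\<^sup>2) - 2*d*(a*x0) + 2*k*b0*a*b" by (simp only: q2(1))
  also have "\<dots> = -2*(b0 * a\<^sup>2) - 2*d*X + 2*k*b0*a*b" by (simp only: q3)
  finally have e1: "2 * x0 / (1 + p0) * (- (b0 / (1 + p0) + d) * x0 + k * (b0 * xr / (1 + pr)))
     = -2*b0*a\<^sup>2 - 2*d*X + 2*k*b0*a*b" by simp
  have e2: "x0\<^sup>2 / (1 + p0)\<^sup>2 = a\<^sup>2" "xr\<^sup>2 / (1 + pr)\<^sup>2 = b\<^sup>2"
    unfolding a_def b_def by (simp_all add: power_divide)
  have "k*b0*(2*a*b) \<le> k*b0*(a\<^sup>2+b\<^sup>2)" using h1 assms by simp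
  moreover have "d*a\<^sup>2 \<le> d*X" using mult_left_mono[OF h2, of d] assms e2(1) X_def by simp
  moreover have e3: "2 * (k * b0 - b0 - d) * x0\<^sup>2 / (1 + p0)\<^sup>2 = 2 * (k * b0 - b0 - d) * a\<^sup>2"
    using e2(1) by (metis times_divide_eq_right)
  ultimately show ?thesis unfolding e1 e3 e2 by (simp add: algebra_simps)
qed

theorem mainTheorem3:
  fixes beta0 n delta r k :: real and phi x :: "real \<Rightarrow> real"
  assumes "beta0 > 0" "n > 0" "delta > 0" "r > 0" "k > 0"
    and "phi \<in> Bplus r"
    and "is_solution beta0 n delta r k phi x"
  shows "Limsup (at_right 0)
           (\<lambda>h. ereal ((V beta0 n r k (seg x h) - V beta0 n r k phi) / h))
         \<le> ereal (2 * (k * beta0 - beta0 - delta) * (phi 0)\<^sup>2 / (1 + phi 0 powr n)\<^sup>2)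
    \<and> (k * beta0 = beta0 + delta \<longrightarrow>
         Limsup (at_right 0)
           (\<lambda>h. ereal ((V beta0 n r k (seg x h) - V beta0 n r k phi) / h)) \<le> 0)"
proof -
  note sol = assms(7)[unfolded is_solution_def]
  define g where "g = (\<lambda>s::real. 2 * s / (1 + s powr n))"
  define f where "f = (\<lambda>u::real. u\<^sup>2 / (1 + u powr n)\<^sup>2)"
  define Fx where "Fx = (\<lambda>t. f (x t))"
  define J where "J = (\<lambda>t. integral {-r..t} Fx)"
  define x' where "x' = - (beta0 / (1 + x 0 powr n) + delta) * x 0
          + k * (beta0 * x (0 - r) / (1 + x (0 - r) powr n))"
  have pc: "continuous_on {0..} (\<lambda>u::real. u powr n)" using powr_cont assms(2) by blast
  have pos: "\<And>u::real. 1 + u powr n \<noteq> 0" by (smt (verit) powr_ge_zero)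
  have gc: "continuous_on {0..} g" unfolding g_def
    using pos by (intro continuous_intros pc) (auto simp: pos)
  have fc: "continuous_on {0..} f" unfolding f_def
    using pos by (intro continuous_intros pc) (auto simp: pos)
  have xc: "continuous_on {-r..} x" using sol by blast
  have xnn: "\<And>t. t \<ge> -r \<Longrightarrow> x t \<ge> 0" using sol by blast
  have Fxc: "continuous_on {-r..} Fx" unfolding Fx_def
    by (rule continuous_on_compose2[OF fc xc]) (auto simp: xnn)
  have x0: "x 0 = phi 0" "x (-r) = phi (-r)" using sol assms(4) by auto
  have xd: "(x has_real_derivative x') (at 0 within {0..})" using sol unfolding x'_def by auto
  have Gd0: "(G n has_real_derivative g (x 0)) (at (x 0) within {0..})"
    unfolding G_def[abs_def] g_def using deriv_int_ray[OF gc, of "x 0"] xnn[of 0] assms(4)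
    by (simp add: g_def)
  have img: "x ` {0..} \<subseteq> {0..}" using xnn assms(4) by force
  have Gx: "((G n \<circ> x) has_real_derivative g (x 0) * x') (at 0 within {0..})"
    by (rule DERIV_image_chain[OF DERIV_subset[OF Gd0 img] xd])
  have J1: "(J has_real_derivative Fx 0) (at 0 within {0..})"
    unfolding J_def using DERIV_subset[OF deriv_int_ray[OF Fxc, of 0]] assms(4) by auto
  have Jr: "(J has_real_derivative Fx (-r)) (at ((\<lambda>h. h - r) 0) within ((\<lambda>h. h - r) ` {0..}))"
  proof -
    have "(\<lambda>h. h - r) ` {0..} \<subseteq> {-r..}" by auto
    thus ?thesis unfolding J_def using DERIV_subset[OF deriv_int_ray[OF Fxc, of "-r"]] by auto
  qed
  have sd: "((\<lambda>h::real. h - r) has_real_derivative 1) (at 0 within {0..})"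
    by (auto intro!: derivative_eq_intros)
  have J2: "((J \<circ> (\<lambda>h. h - r)) has_real_derivative Fx (-r) * 1) (at 0 within {0..})"
    by (rule DERIV_image_chain[OF Jr sd])
  define F where "F = (\<lambda>h. (G n \<circ> x) h + k * beta0 * (J h - (J \<circ> (\<lambda>h. h - r)) h))"
  define D where "D = g (x 0) * x' + k * beta0 * (Fx 0 - Fx (-r) * 1)"
  have Fd: "(F has_real_derivative D) (at 0 within {0..})"
  proof -
    have "((\<lambda>z. J z - (J \<circ> (\<lambda>h. h - r)) z) has_real_derivative Fx 0 - Fx (-r) * 1) (at 0 within {0..})"
      by (rule DERIV_diff[OF J1 J2])
    from DERIV_add[OF Gx DERIV_cmult[OF this, of "k * beta0"]] show ?thesis
      unfolding F_def D_def by simp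
  qed
  have FV: "F h = V beta0 n r k (seg x h)" if "h \<ge> 0" for h
  proof -
    have int: "Fx integrable_on {-r..h}"
      by (rule integrable_continuous_real, rule continuous_on_subset[OF Fxc]) auto
    have "integral {-r..h-r} Fx + integral {h-r..h} Fx = integral {-r..h} Fx"
      by (rule Henstock_Kurzweil_Integration.integral_combine[OF _ _ int]) (use that assms(4) in auto)
    moreover have "integral {h-r..h} Fx = integral {-r..0} (\<lambda>s. Fx (s + h))"
      using integral_shift_real_ivl[of "h-r" h h Fx] by simp
    ultimately have "J h - J (h - r) = integral {-r..0} (\<lambda>s. Fx (s + h))"
      unfolding J_def by simp
    thus ?thesis unfolding F_def V_def seg_def Fx_def f_def
      by (simp add: add.commute)
  qed
  have FV0: "F 0 = V beta0 n r k phi"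
  proof -
    have "F 0 = V beta0 n r k (seg x 0)" using FV by simp
    also have "\<dots> = V beta0 n r k phi"
    proof -
      have "integral {-r..0} (\<lambda>s. (seg x 0 s)\<^sup>2 / (1 + seg x 0 s powr n)\<^sup>2)
          = integral {-r..0} (\<lambda>s. (phi s)\<^sup>2 / (1 + phi s powr n)\<^sup>2)"
        by (rule integral_cong) (use sol in \<open>auto simp: seg_def\<close>)
      thus ?thesis unfolding V_def using x0 by (simp add: seg_def)
    qed
    finally show ?thesis .
  qed
  have "((\<lambda>y. (F y - F 0) / (y - 0)) \<longlongrightarrow> D) (at 0 within {0..})"
    using Fd by (simp add: has_field_derivative_iff)
  hence "((\<lambda>y. (F y - F 0) / (y - 0)) \<longlongrightarrow> D) (at_right 0)"
    by (rule tendsto_within_subset) auto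
  hence t: "((\<lambda>h. (V beta0 n r k (seg x h) - V beta0 n r k phi) / h) \<longlongrightarrow> D) (at_right 0)"
  proof (rule Lim_transform_eventually)
    show "\<forall>\<^sub>F y in at_right 0. (F y - F 0) / (y - 0) = (V beta0 n r k (seg x y) - V beta0 n r k phi) / y"
      using FV FV0 by (auto simp: eventually_at_filter)
  qed
  have L: "Limsup (at_right 0) (\<lambda>h. ereal ((V beta0 n r k (seg x h) - V beta0 n r k phi) / h)) = ereal D"
    by (rule lim_imp_Limsup) (auto intro: t)
  have Dle: "D \<le> 2 * (k * beta0 - beta0 - delta) * (phi 0)\<^sup>2 / (1 + phi 0 powr n)\<^sup>2"
  proof -
    have "D = 2 * x 0 / (1 + x 0 powr n) * (- (beta0 / (1 + x 0 powr n) + delta) * x 0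
          + k * (beta0 * x (-r) / (1 + x (-r) powr n)))
         + k * beta0 * ((x 0)\<^sup>2 / (1 + x 0 powr n)\<^sup>2 - (x (-r))\<^sup>2 / (1 + x (-r) powr n)\<^sup>2)"
      unfolding D_def g_def x'_def Fx_def f_def by simp
    also have "\<dots> \<le> 2 * (k * beta0 - beta0 - delta) * (x 0)\<^sup>2 / (1 + x 0 powr n)\<^sup>2"
      using assms xnn[of 0] xnn[of "-r"] by (intro ineq_main) auto
    finally show ?thesis using x0 by simp
  qed
  show ?thesis using L Dle by auto
qed

end
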